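(* Let $0<H<1$, let $B_H$ be a fractional Brownian motion on $[0,1]$ with Hurst parameter $H$, and let $\|\cdot\|$ be a norm on the H\"older space $C_0^\gamma[0,1]$ for some $0<\gamma<H$ such that there are constants $\theta,C_1,C_2>0$ with \[ -C_1\varepsilon^{-\theta}\le \log \mathbb{P}\big[\|B_H\|\le \varepsilon\big]\le -C_2\varepsilon^{-\theta},\qquad \varepsilon\in(0,1]. \] Let $\eta_k(H)=\mathbb{E}\big[\|B_H\|^{-k}\big]$. Then $\eta_k(H)=k^{k/\theta+o(k)}$ as $k\uparrow\infty$. *)

theory Defs
  imports "HOL-Probability.Probability"
begin

definition fbm_cov :: "real \<Rightarrow> real \<Rightarrow> real \<Rightarrow> real" where
  "fbm_cov H s t = (s powr (2*H) + t powr (2*H) - \<bar>t - s\<bar> powr (2*H)) / 2"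

definition centered_gaussian_process ::
  "'a measure \<Rightarrow> (real \<Rightarrow> 'a \<Rightarrow> real) \<Rightarrow> real set \<Rightarrow> (real \<Rightarrow> real \<Rightarrow> real) \<Rightarrow> bool" where
  "centered_gaussian_process M X T R \<longleftrightarrow>
     (\<forall>t\<in>T. X t \<in> borel_measurable M) \<and>
     (\<forall>F a. finite F \<and> F \<subseteq> T \<longrightarrow>
        (let v = (\<Sum>s\<in>F. \<Sum>t\<in>F. a s * a t * R s t) in
          (if v = 0 then (AE \<omega> in M. (\<Sum>t\<in>F. a t * X t \<omega>) = 0)
           else distributed M lborel (\<lambda>\<omega>. \<Sum>t\<in>F. a t * X t \<omega>) (normal_density 0 (sqrt v)))))"

definition fbm :: "'a measure \<Rightarrow> real \<Rightarrow> (real \<Rightarrow> 'a \<Rightarrow> real) \<Rightarrow> bool" where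
  "fbm M H B \<longleftrightarrow> prob_space M \<and> centered_gaussian_process M B {0..1} (fbm_cov H)"

text \<open>Hoelder space C_0^gamma[0,1]: gamma-Hoelder functions on [0,1] vanishing at 0
  (represented extensionally: zero outside [0,1]).\<close>
definition holder0 :: "real \<Rightarrow> (real \<Rightarrow> real) set" where
  "holder0 \<gamma> = {f. f 0 = 0 \<and> (\<forall>t. t \<notin> {0..1} \<longrightarrow> f t = 0) \<and>
      (\<exists>C. \<forall>s\<in>{0..1}. \<forall>t\<in>{0..1}. \<bar>f s - f t\<bar> \<le> C * \<bar>s - t\<bar> powr \<gamma>)}"

definition is_norm_on :: "(real \<Rightarrow> real) set \<Rightarrow> ((real \<Rightarrow> real) \<Rightarrow> real) \<Rightarrow> bool" where
  "is_norm_on V N \<longleftrightarrow>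
     (\<forall>f\<in>V. N f \<ge> 0) \<and>
     (\<forall>f\<in>V. N f = 0 \<longleftrightarrow> f = (\<lambda>t. 0)) \<and>
     (\<forall>c. \<forall>f\<in>V. N (\<lambda>t. c * f t) = \<bar>c\<bar> * N f) \<and>
     (\<forall>f\<in>V. \<forall>g\<in>V. N (\<lambda>t. f t + g t) \<le> N f + N g)"

definition path01 :: "(real \<Rightarrow> 'a \<Rightarrow> real) \<Rightarrow> 'a \<Rightarrow> real \<Rightarrow> real" where
  "path01 B \<omega> = (\<lambda>t. if t \<in> {0..1} then B t \<omega> else 0)"

end

theory Submission imports Defs "HOL-Real_Asymp.Real_Asymp" begin

lemma key_bound:
  fixes u k c \<theta> :: real
  assumes "u > 0" "k > 0" "c > 0" "\<theta> > 0"
  shows "u powr k * exp (- c * u powr \<theta>) \<le> (k / (c * \<theta>)) powr (k / \<theta>)"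
proof -
  define y where "y = c * \<theta> * u powr \<theta> / k"
  have y: "y > 0" using assms by (simp add: y_def)
  have "ln y \<le> y - 1" using y by (rule ln_le_minus_one)
  moreover have "ln y = ln c + ln \<theta> + \<theta> * ln u - ln k"
    using assms by (simp add: y_def ln_div ln_mult ln_powr)
  ultimately have h: "\<theta> * ln u \<le> y - 1 - ln c - ln \<theta> + ln k" by linarith
  have "k / \<theta> * (\<theta> * ln u) \<le> k / \<theta> * (y - 1 - ln c - ln \<theta> + ln k)"
    using h assms by (intro mult_left_mono) auto
  also have "\<dots> = c * u powr \<theta> - k/\<theta> + k/\<theta> * (ln k - ln c - ln \<theta>)"
    using assms by (simp add: y_def field_simps)
  finally have h1: "k * ln u \<le> c * u powr \<theta> - k/\<theta> + k/\<theta> * (ln k - ln c - ln \<theta>)"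
    using assms by simp
  have kp: "k/\<theta> > 0" using assms by simp
  have eq: "ln (k / (c*\<theta>)) = ln k - ln c - ln \<theta>" using assms by (simp add: ln_div ln_mult)
  have h2: "k * ln u \<le> c * u powr \<theta> + k/\<theta> * ln (k / (c*\<theta>))"
    unfolding eq using h1 kp by linarith
  have "u powr k * exp (- c * u powr \<theta>) = exp (k * ln u - c * u powr \<theta>)"
    using assms by (simp add: powr_def exp_diff exp_minus field_simps)
  also have "\<dots> \<le> exp (k/\<theta> * ln (k / (c*\<theta>)))" using h2 by simp
  also have "\<dots> = (k / (c * \<theta>)) powr (k / \<theta>)"
    using assms by (simp add: powr_def)
  finally show ?thesis .
qed

lemma small_o_aux: "(\<lambda>k::nat. (real k + 1) / ln (real k)) \<in> o(\<lambda>k. real k)"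
  by real_asymp


theorem lemma2p4:
  fixes M :: "'a measure" and B :: "real \<Rightarrow> 'a \<Rightarrow> real"
    and N :: "(real \<Rightarrow> real) \<Rightarrow> real"
    and H \<gamma> \<theta> C\<^sub>1 C\<^sub>2 :: real
  assumes "0 < H" "H < 1"
    and "fbm M H B"
    and "0 < \<gamma>" "\<gamma> < H"
    and "\<forall>\<omega>\<in>space M. path01 B \<omega> \<in> holder0 \<gamma>"
    and "is_norm_on (holder0 \<gamma>) N"
    and "(\<lambda>\<omega>. N (path01 B \<omega>)) \<in> borel_measurable M"
    and "\<theta> > 0" "C\<^sub>1 > 0" "C\<^sub>2 > 0"
    and "\<forall>\<epsilon>\<in>{0<..1}.
           - C\<^sub>1 * \<epsilon> powr (-\<theta>) \<le> ln (measure M {\<omega>\<in>space M. N (path01 B \<omega>) \<le> \<epsilon>}) \<and>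
           ln (measure M {\<omega>\<in>space M. N (path01 B \<omega>) \<le> \<epsilon>}) \<le> - C\<^sub>2 * \<epsilon> powr (-\<theta>)"
  shows "\<exists>r :: nat \<Rightarrow> real. r \<in> o(\<lambda>k. real k) \<and>
           (\<forall>\<^sub>F k in at_top.
              (\<integral>\<^sup>+ \<omega>. inverse (ennreal (N (path01 B \<omega>)) ^ k) \<partial>M)
                = ennreal (real k powr (real k / \<theta> + r k)))"
proof -
  define X where "X = (\<lambda>\<omega>. N (path01 B \<omega>))"
  define P where "P = (\<lambda>e. measure M {\<omega>\<in>space M. X \<omega> \<le> e})"
  define I where "I = (\<lambda>k::nat. \<integral>\<^sup>+ \<omega>. inverse (ennreal (X \<omega>)) ^ k \<partial>M)"
  have th: "\<theta> > 0" and C1: "C\<^sub>1 > 0" and C2: "C\<^sub>2 > 0" using assms by auto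
  have "prob_space M" using assms(3) by (simp add: fbm_def)
  then interpret prob_space M .
  have Xm[measurable]: "X \<in> borel_measurable M" using assms(8) by (simp add: X_def)
  have Xnn: "\<And>\<omega>. \<omega> \<in> space M \<Longrightarrow> X \<omega> \<ge> 0" using assms(6,7) by (simp add: X_def is_norm_on_def)
  have Sm: "\<And>e. {\<omega>\<in>space M. X \<omega> \<le> e} \<in> sets M" by measurable
  have Pb: "exp (- C\<^sub>1 * e powr (-\<theta>)) \<le> P e \<and> P e \<le> exp (- C\<^sub>2 * e powr (-\<theta>))"
    if e: "0 < e" "e \<le> 1" for e
  proof -
    have l: "- C\<^sub>1 * e powr (-\<theta>) \<le> ln (P e)" "ln (P e) \<le> - C\<^sub>2 * e powr (-\<theta>)"
      using assms(12) e by (auto simp: P_def X_def)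
    have "C\<^sub>2 * e powr (-\<theta>) > 0" using C2 e by simp
    hence "P e \<noteq> 0" using l(2) by auto
    hence Ppos: "P e > 0" by (simp add: P_def less_le)
    have "exp (- C\<^sub>1 * e powr (-\<theta>)) \<le> exp (ln (P e))" using l(1) by simp
    moreover have "exp (ln (P e)) \<le> exp (- C\<^sub>2 * e powr (-\<theta>))" using l(2) by simp
    ultimately show ?thesis using Ppos by simp
  qed
  have lower: "ennreal (real k powr (real k / \<theta>) * exp (- C\<^sub>1 * real k)) \<le> I k"
    if k: "k \<ge> 1" for k :: nat
  proof -
    define a where "a = real k powr (1/\<theta>)"
    have a1: "a \<ge> 1" using k th by (simp add: a_def ge_one_powr_ge_zero)
    define e where "e = 1/a"
    have e: "0 < e" "e \<le> 1" using a1 by (auto simp: e_def)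
    have epow: "e powr (-\<theta>) = real k"
      using a1 th k by (simp add: e_def a_def powr_powr powr_minus_divide powr_divide)
    have apow: "a ^ k = real k powr (real k / \<theta>)"
      using a1 k by (simp add: a_def powr_powr flip: powr_realpow)
    define S where "S = {\<omega>\<in>space M. X \<omega> \<le> e}"
    have "(\<integral>\<^sup>+ \<omega>. ennreal (a ^ k) * indicator S \<omega> \<partial>M) \<le> I k"
      unfolding I_def
    proof (rule nn_integral_mono)
      fix \<omega> assume om: "\<omega> \<in> space M"
      show "ennreal (a ^ k) * indicator S \<omega> \<le> inverse (ennreal (X \<omega>)) ^ k"
      proof (cases "\<omega> \<in> S")
        case True
        hence xe: "X \<omega> \<le> e" by (simp add: S_def)
        have "ennreal a \<le> inverse (ennreal (X \<omega>))"
        proof (cases "X \<omega> = 0")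
          case True thus ?thesis by simp
        next
          case False
          hence xp: "X \<omega> > 0" using Xnn[OF om] by simp
          have "a \<le> inverse (X \<omega>)" using xe xp a1
            by (simp add: e_def field_simps)
          thus ?thesis using xp by (simp add: inverse_ennreal)
        qed
        hence "ennreal a ^ k \<le> inverse (ennreal (X \<omega>)) ^ k" by (rule power_mono) simp
        thus ?thesis using True a1 by (simp add: ennreal_power)
      qed simp
    qed
    also have "(\<integral>\<^sup>+ \<omega>. ennreal (a ^ k) * indicator S \<omega> \<partial>M) = ennreal (a ^ k * P e)"
      using Sm[of e] a1 by (simp add: nn_integral_cmult_indicator S_def P_def emeasure_eq_measure ennreal_mult)
    finally have "ennreal (a ^ k * P e) \<le> I k" .
    moreover have "a ^ k * P e \<ge> real k powr (real k / \<theta>) * exp (- C\<^sub>1 * real k)"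
      unfolding apow using Pb[OF e] epow by (intro mult_left_mono) auto
    ultimately show ?thesis by (meson ennreal_leI order_trans)
  qed
  define c where "c = C\<^sub>2 / 2"
  have c: "c > 0" using C2 by (simp add: c_def)
  define S' where "S' = (\<lambda>n::nat. {\<omega>\<in>space M. X \<omega> \<le> (real n + 1) powr (-1/\<theta>)})"
  have S'm[measurable]: "\<And>n. S' n \<in> sets M" unfolding S'_def by (rule Sm)
  have PS': "measure M (S' n) \<le> exp (- C\<^sub>2 * (real n + 1))" for n
  proof -
    have "1 \<le> (real n + 1) powr (1/\<theta>)" using th by (intro ge_one_powr_ge_zero) auto
    hence e: "0 < (real n + 1) powr (-1/\<theta>)" "(real n + 1) powr (-1/\<theta>) \<le> 1"
      using th by (auto simp: powr_minus_divide)
    have "((real n + 1) powr (-1/\<theta>)) powr (-\<theta>) = real n + 1"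
      using th by (simp add: powr_powr)
    thus ?thesis using Pb[OF e] by (simp add: P_def S'_def)
  qed
  define Z where "Z = {\<omega>\<in>space M. X \<omega> \<le> 0}"
  have Zm: "Z \<in> sets M" unfolding Z_def by (rule Sm)
  have Z0: "measure M Z = 0"
  proof (rule ccontr)
    assume "measure M Z \<noteq> 0"
    hence p: "measure M Z > 0" by (simp add: less_le)
    obtain n :: nat where n: "1 / (C\<^sub>2 * measure M Z) < real n" using reals_Archimedean2 by blast
    have "Z \<subseteq> S' n" unfolding Z_def S'_def
      using th by (auto intro: order_trans[OF _ powr_ge_zero])
    hence "measure M Z \<le> measure M (S' n)" by (intro finite_measure_mono) auto
    also have "\<dots> \<le> exp (- C\<^sub>2 * (real n + 1))" by (rule PS')
    also have "\<dots> = 1 / exp (C\<^sub>2 * (real n + 1))" by (simp only: mult_minus_left exp_minus) (simp add: divide_inverse)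
    also have "\<dots> < measure M Z"
    proof -
      have "1 + C\<^sub>2 * (real n + 1) \<le> exp (C\<^sub>2 * (real n + 1))" by (rule exp_ge_add_one_self)
      moreover have "1 / measure M Z < C\<^sub>2 * real n" using n p C2 by (simp add: field_simps)
      ultimately have "1 / measure M Z < exp (C\<^sub>2 * (real n + 1))" using C2 by (simp add: algebra_simps)
      thus ?thesis using p by (simp add: field_simps)
    qed
    finally show False by simp
  qed
  have AEpos: "AE \<omega> in M. X \<omega> > 0"
  proof (rule AE_I')
    show "Z \<in> null_sets M" using Zm Z0 by (simp add: null_sets_def emeasure_eq_measure)
    show "{\<omega> \<in> space M. \<not> 0 < X \<omega>} \<subseteq> Z" by (auto simp: Z_def)
  qed
  define K where "K = exp c + 1 / (1 - exp (- c))"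
  have ec: "exp (- c) < 1" using c by simp
  have K: "K > 0" using ec c by (simp add: K_def add_pos_pos)
  define A where "A = (\<lambda>k::nat. (real k / (c * \<theta>)) powr (real k / \<theta>))"
  have upper: "I k \<le> ennreal (A k * K)" if k: "k \<ge> 1" for k :: nat
  proof -
    define g where "g = (\<lambda>\<omega>. ennreal (exp c) + (\<Sum>n. ennreal (exp (c * (real n + 2))) * indicator (S' n) \<omega>))"
    have gm[measurable]: "g \<in> borel_measurable M" unfolding g_def by measurable
    have "I k \<le> (\<integral>\<^sup>+ \<omega>. ennreal (A k) * g \<omega> \<partial>M)"
      unfolding I_def
    proof (rule nn_integral_mono_AE)
      show "AE \<omega> in M. inverse (ennreal (X \<omega>)) ^ k \<le> ennreal (A k) * g \<omega>"
        using AE_space AEpos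
      proof eventually_elim
        case (elim \<omega>)
        define u where "u = 1 / X \<omega>"
        define v where "v = u powr \<theta>"
        have u: "u > 0" using elim by (simp add: u_def)
        have v: "v > 0" using u by (simp add: v_def)
        have "inverse (ennreal (X \<omega>)) ^ k = ennreal (u powr real k)"
          using elim u by (simp add: inverse_ennreal u_def ennreal_power powr_realpow divide_inverse)
        also have "u powr real k \<le> A k * exp (c * v)"
        proof -
          have "u powr real k * exp (- c * v) \<le> A k"
            unfolding A_def v_def using key_bound[OF u _ c th, of "real k"] k by simp
          hence "u powr real k * exp (- c * v) * exp (c * v) \<le> A k * exp (c * v)"
            by (intro mult_right_mono) auto
          thus ?thesis by (simp add: mult.assoc flip: exp_add)
        qed
        hence "ennreal (u powr real k) \<le> ennreal (A k * exp (c * v))" by (rule ennreal_leI)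
        also have "\<dots> = ennreal (A k) * ennreal (exp (c * v))"
          by (simp add: A_def ennreal_mult)
        also have "ennreal (exp (c * v)) \<le> g \<omega>"
        proof (cases "v < 1")
          case True
          hence "exp (c * v) \<le> exp c" using c by simp
          thus ?thesis unfolding g_def by (intro add_increasing2) auto
        next
          case False
          define n where "n = nat \<lfloor>v\<rfloor> - 1"
          have n1: "real n + 1 \<le> v" and n2: "v < real n + 2"
            using False by (auto simp: n_def) linarith+
          have "X \<omega> = v powr (-1/\<theta>)"
            using th u elim by (simp add: v_def u_def powr_powr powr_minus_divide)
          also have "\<dots> \<le> (real n + 1) powr (-1/\<theta>)"
            using n1 th by (intro powr_mono2') auto
          finally have "\<omega> \<in> S' n" using elim by (simp add: S'_def)
          have "ennreal (exp (c * v)) \<le> ennreal (exp (c * (real n + 2)))"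
            using n2 c by (intro ennreal_leI) simp
          also have "\<dots> = ennreal (exp (c * (real n + 2))) * indicator (S' n) \<omega>"
            using \<open>\<omega> \<in> S' n\<close> by simp
          also have "\<dots> \<le> (\<Sum>m. ennreal (exp (c * (real m + 2))) * indicator (S' m) \<omega>)"
          proof -
            have "sum (\<lambda>m. ennreal (exp (c * (real m + 2))) * indicator (S' m) \<omega>) {n}
               \<le> (\<Sum>m. ennreal (exp (c * (real m + 2))) * indicator (S' m) \<omega>)"
              by (rule sum_le_suminf[OF summableI]) auto
            thus ?thesis by (simp only: sum.insert finite.emptyI empty_iff sum.empty add_0_right simp_thms)
          qed
          finally show ?thesis unfolding g_def by (intro add_increasing) auto
        qed
        finally show ?case by (simp add: mult_left_mono)
      qed
    qed
    also have "(\<integral>\<^sup>+ \<omega>. ennreal (A k) * g \<omega> \<partial>M) = ennreal (A k) * (ennreal (exp c) +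
        (\<Sum>n. ennreal (exp (c * (real n + 2))) * emeasure M (S' n)))"
      by (simp add: nn_integral_cmult g_def nn_integral_add nn_integral_suminf nn_integral_cmult_indicator emeasure_space_1)
    also have "(\<Sum>n. ennreal (exp (c * (real n + 2))) * emeasure M (S' n)) \<le> (\<Sum>n. ennreal (exp (-c) ^ n))"
    proof (intro suminf_le summableI)
      fix n
      have eq: "ennreal (exp (c * (real n + 2))) * emeasure M (S' n) = ennreal (exp (c * (real n + 2)) * measure M (S' n))"
        by (simp add: emeasure_eq_measure ennreal_mult)
      have "exp (c * (real n + 2)) * measure M (S' n) \<le> exp (c * (real n + 2)) * exp (- C\<^sub>2 * (real n + 1))"
        by (intro mult_left_mono PS') auto
      also have "\<dots> = exp (-c) ^ n"
        by (simp add: c_def flip: exp_add exp_of_nat_mult) (simp add: algebra_simps)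
      finally have r: "exp (c * (real n + 2)) * measure M (S' n) \<le> exp (-c) ^ n" .
      show "ennreal (exp (c * (real n + 2))) * emeasure M (S' n) \<le> ennreal (exp (-c) ^ n)"
        unfolding eq by (rule ennreal_leI[OF r])
    qed
    also have "(\<Sum>n. ennreal (exp (-c) ^ n)) = ennreal (1 / (1 - exp (-c)))"
      using ec by (intro suminf_ennreal_eq geometric_sums) auto
    finally show ?thesis
      using ec by (simp add: K_def A_def ennreal_mult ennreal_plus[symmetric] mult_left_mono add_left_mono del: ennreal_plus)
  qed
  define r where "r = (\<lambda>k::nat. if k \<ge> 2 then ln (enn2real (I k)) / ln (real k) - real k / \<theta> else 0)"
  define D where "D = C\<^sub>1 + \<bar>ln c + ln \<theta>\<bar> / \<theta> + \<bar>ln K\<bar>"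
  have main: "I k = ennreal (real k powr (real k / \<theta> + r k)) \<and> \<bar>r k\<bar> \<le> D * ((real k + 1) / ln (real k))"
    if k: "k \<ge> 2" for k :: nat
  proof -
    define L where "L = real k powr (real k / \<theta>) * exp (- C\<^sub>1 * real k)"
    have Lp: "L > 0" using k by (simp add: L_def)
    have AKp: "A k * K > 0" using k K c th by (simp add: A_def)
    have lo: "ennreal L \<le> I k" using lower[of k] k by (simp add: L_def)
    have hi: "I k \<le> ennreal (A k * K)" using upper[of k] k by simp
    have ntop: "I k \<noteq> top" using hi by (metis ennreal_neq_top neq_top_trans)
    define e where "e = enn2real (I k)"
    have Ie: "I k = ennreal e" using ntop unfolding e_def by (simp add: ennreal_enn2real_if)
    have e0: "e \<ge> 0" by (simp add: e_def)
    have Le: "L \<le> e" using lo e0 by (simp add: Ie ennreal_le_iff)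
    have eU: "e \<le> A k * K" using hi AKp by (simp add: Ie ennreal_le_iff2)
    have ep: "e > 0" using Lp Le by simp
    have lk: "ln (real k) > 0" using k by simp
    have rk: "r k = ln e / ln (real k) - real k / \<theta>" using k by (simp add: r_def e_def)
    have "real k powr (real k / \<theta> + r k) = exp (ln e)"
      using k lk by (simp add: powr_def rk)
    hence eq: "I k = ennreal (real k powr (real k / \<theta> + r k))" using ep Ie by simp
    have lnL: "ln L = real k / \<theta> * ln (real k) - C\<^sub>1 * real k"
      using k by (simp add: L_def ln_mult ln_powr)
    have lnU: "ln (A k * K) = real k / \<theta> * (ln (real k) - ln c - ln \<theta>) + ln K"
      using k c th K by (simp add: A_def ln_mult ln_powr ln_div)
    have b1: "ln L \<le> ln e" using Le Lp by simp
    have b2: "ln e \<le> ln (A k * K)" using eU ep by simp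
    have rl: "r k * ln (real k) = ln e - real k / \<theta> * ln (real k)"
      using lk by (simp add: rk field_simps)
    have "\<bar>r k * ln (real k)\<bar> \<le> C\<^sub>1 * real k + real k / \<theta> * \<bar>ln c + ln \<theta>\<bar> + \<bar>ln K\<bar>"
    proof -
      define T where "T = real k / \<theta> * ln (real k)"
      define Q where "Q = real k / \<theta> * (ln c + ln \<theta>)"
      have U': "ln (A k * K) = T - Q + ln K" unfolding lnU T_def Q_def by (simp add: algebra_simps)
      have L': "ln L = T - C\<^sub>1 * real k" unfolding lnL T_def by simp
      have R': "r k * ln (real k) = ln e - T" unfolding rl T_def by simp
      have Qa: "\<bar>Q\<bar> = real k / \<theta> * \<bar>ln c + ln \<theta>\<bar>"
        using th by (simp add: Q_def abs_mult)
      have "Q \<le> \<bar>Q\<bar>" "- Q \<le> \<bar>Q\<bar>" "ln K \<le> \<bar>ln K\<bar>" "- ln K \<le> \<bar>ln K\<bar>" by auto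
      moreover have "C\<^sub>1 * real k \<ge> 0" using C1 by simp
      ultimately show ?thesis unfolding R' Qa[symmetric] using b1 b2 U' L' by (simp only: abs_le_iff) linarith
    qed
    also have "\<dots> \<le> D * (real k + 1)"
    proof -
      have "C\<^sub>1 * real k + real k / \<theta> * \<bar>ln c + ln \<theta>\<bar> + \<bar>ln K\<bar> \<le> (C\<^sub>1 + \<bar>ln c + ln \<theta>\<bar> / \<theta>) * real k + \<bar>ln K\<bar> * (real k + 1)"
        by (simp add: algebra_simps)
      also have "\<dots> \<le> D * (real k + 1)"
      proof -
        have "0 \<le> C\<^sub>1 + \<bar>ln c + ln \<theta>\<bar> / \<theta>" using C1 th by simp
        hence "(C\<^sub>1 + \<bar>ln c + ln \<theta>\<bar> / \<theta>) * real k \<le> (C\<^sub>1 + \<bar>ln c + ln \<theta>\<bar> / \<theta>) * (real k + 1)"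
          by (intro mult_left_mono) auto
        thus ?thesis unfolding D_def by (simp add: algebra_simps)
      qed
      finally show ?thesis .
    qed
    finally have "\<bar>r k\<bar> * ln (real k) \<le> D * (real k + 1)" using lk by (simp add: abs_mult)
    hence "\<bar>r k\<bar> \<le> D * (real k + 1) / ln (real k)" using lk by (simp add: field_simps)
    thus ?thesis using eq by simp
  qed
  have "r \<in> O(\<lambda>k. (real k + 1) / ln (real k))"
  proof (rule bigoI[where c = D])
    show "\<forall>\<^sub>F k in at_top. norm (r k) \<le> D * norm ((real k + 1) / ln (real k))"
      using eventually_ge_at_top[of "2::nat"]
    proof eventually_elim
      case (elim k)
      have "ln (real k) > 0" using elim by simp
      thus ?case using main[OF elim] by simp
    qed
  qed
  hence "r \<in> o(\<lambda>k. real k)" using small_o_aux by (rule landau_o.big_small_trans)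
  moreover have "\<forall>\<^sub>F k in at_top. I k = ennreal (real k powr (real k / \<theta> + r k))"
    using eventually_ge_at_top[of "2::nat"] by eventually_elim (use main in blast)
  ultimately show ?thesis unfolding I_def X_def ennreal_inverse_power by blast
qed

end
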